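(* For positive integers $m\ne n$, the virtual knots $K_m$ and $K_n$ are not virtually equivalent, where $K_n$ denotes any virtual knot diagram whose arrow diagram is ${\mathcal A}_n$. (They are distinguished by the generalized Alexander polynomial obtained from the Alexander biquandle.)
   Context: A virtual knot diagram is a generic immersion of an oriented circle in the plane in which each double point is a real crossing (with over/under information) or a virtual crossing. Virtual equivalence is generated by planar isotopy, the classical Reidemeister moves R1–R3, the virtual moves V1–V3 (Reidemeister moves with all crossings virtual) and V4 (a strand with two consecutive virtual crossings passes across a real crossing). The arrow diagram of a diagram is the counterclockwise-oriented parametrizing circle with one arrow per real crossing joining its two preimages, pointing from the overcrossing preimage to the undercrossing preimage; an endpoint has sign $+$ if, viewing its strand in the direction of orientation, the other strand passes from right to left, and $-$ otherwise. The arrow diagram ${\mathcal A}_n$ has arrows $x,y_1,\dots,y_n$ with endpoints in counterclockwise order $X^+,Y_1^+,\dots,Y_n^+,X^-,Y_n^-,\dots,Y_1^-$; $x$ points from $X^+$ to $X^-$; $y_j$ points from $Y_j^-$ to $Y_j^+$ if $n-j$ is even and from $Y_j^+$ to $Y_j^-$ if $n-j$ is odd. *)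

theory Defs
  imports Main
begin

text \<open>
Combinatorial model of virtual knots via arrow (Gauss) diagrams.
A diagram is a cyclic word of endpoint letters (c, ov, sg) listed in the
order met when traversing the parametrizing circle in its orientation:
c is the crossing (arrow) label, ov = True iff the endpoint is the
overcrossing preimage (tail of the arrow), sg = True iff the endpoint
sign is +.
\<close>

type_synonym letter = "nat \<times> bool \<times> bool"
type_synonym gword = "letter list"

definition gauss_wf :: "gword \<Rightarrow> bool" where
  "gauss_wf w \<longleftrightarrow>
     (\<forall>c \<in> fst ` set w. \<exists>ov sg. filter (\<lambda>l. fst l = c) w = [(c, ov, sg), (c, \<not> ov, \<not> sg)])"

text \<open>Three local strands (lines) 1,2,3 with heights
h1,h2,h3 (distinct), crossing labels k12,k13,k23, orientation bits e1,e2,e3 of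
the lines relative to a counterclockwise traversal of the triangle and a
handedness bit eta.  The endpoint sign on line i at its crossing with line j
is + iff line j passes from right to left.  The pair of letters on line i,
in order of traversal:\<close>

definition r3_sg :: "bool \<Rightarrow> bool \<Rightarrow> bool \<Rightarrow> bool" where
  "r3_sg eta ei ej = ((ei = ej) = eta)"

definition r3_P1 :: "bool \<Rightarrow> bool \<Rightarrow> bool \<Rightarrow> bool \<Rightarrow> nat \<Rightarrow> nat \<Rightarrow> nat \<Rightarrow> nat \<Rightarrow> nat \<Rightarrow> nat \<Rightarrow> gword" where
  "r3_P1 e1 e2 e3 eta h1 h2 h3 k12 k13 k23 =
     (let L12 = (k12, h2 < h1, r3_sg eta e1 e2);
          L13 = (k13, h3 < h1, \<not> r3_sg eta e3 e1)
      in if e1 then [L13, L12] else [L12, L13])"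

definition r3_P2 :: "bool \<Rightarrow> bool \<Rightarrow> bool \<Rightarrow> bool \<Rightarrow> nat \<Rightarrow> nat \<Rightarrow> nat \<Rightarrow> nat \<Rightarrow> nat \<Rightarrow> nat \<Rightarrow> gword" where
  "r3_P2 e1 e2 e3 eta h1 h2 h3 k12 k13 k23 =
     (let L21 = (k12, h1 < h2, \<not> r3_sg eta e1 e2);
          L23 = (k23, h3 < h2, r3_sg eta e2 e3)
      in if e2 then [L21, L23] else [L23, L21])"

definition r3_P3 :: "bool \<Rightarrow> bool \<Rightarrow> bool \<Rightarrow> bool \<Rightarrow> nat \<Rightarrow> nat \<Rightarrow> nat \<Rightarrow> nat \<Rightarrow> nat \<Rightarrow> nat \<Rightarrow> gword" where
  "r3_P3 e1 e2 e3 eta h1 h2 h3 k12 k13 k23 =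
     (let L32 = (k23, h2 < h3, \<not> r3_sg eta e2 e3);
          L31 = (k13, h1 < h3, r3_sg eta e3 e1)
      in if e3 then [L32, L31] else [L31, L32])"

definition labels :: "gword \<Rightarrow> nat set" where
  "labels w = fst ` set w"

text \<open>Elementary moves on arrow diagrams: cyclic rotation, relabelling of
arrows, and the Reidemeister moves R1, R2 (both orientations), R3 (all oriented
versions realized by a triangle of three strands).  Planar isotopy and the
virtual moves V1--V4 do not change the arrow diagram.\<close>

inductive gmove :: "gword \<Rightarrow> gword \<Rightarrow> bool" where
  rot: "gmove (x # w) (w @ [x])"
| relabel: "inj f \<Longrightarrow> gmove w (map (\<lambda>(c, ov, sg). (f c, ov, sg)) w)"
| r1: "c \<notin> labels (w1 @ w2) \<Longrightarrow>
       gmove (w1 @ w2) (w1 @ [(c, ov, sg), (c, \<not> ov, \<not> sg)] @ w2)"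
| r2a: "c \<noteq> d \<Longrightarrow> c \<notin> labels (w1 @ w2 @ w3) \<Longrightarrow> d \<notin> labels (w1 @ w2 @ w3) \<Longrightarrow>
       gmove (w1 @ w2 @ w3)
             (w1 @ [(c, True, sg), (d, True, \<not> sg)] @ w2 @ [(c, False, \<not> sg), (d, False, sg)] @ w3)"
| r2b: "c \<noteq> d \<Longrightarrow> c \<notin> labels (w1 @ w2 @ w3) \<Longrightarrow> d \<notin> labels (w1 @ w2 @ w3) \<Longrightarrow>
       gmove (w1 @ w2 @ w3)
             (w1 @ [(c, True, sg), (d, True, \<not> sg)] @ w2 @ [(d, False, sg), (c, False, \<not> sg)] @ w3)"
| r3: "h1 \<noteq> h2 \<Longrightarrow> h1 \<noteq> h3 \<Longrightarrow> h2 \<noteq> h3 \<Longrightarrow>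
       k12 \<noteq> k13 \<Longrightarrow> k12 \<noteq> k23 \<Longrightarrow> k13 \<noteq> k23 \<Longrightarrow>
       {k12, k13, k23} \<inter> labels (w1 @ w2 @ w3 @ w4) = {} \<Longrightarrow>
       gmove (w1 @ r3_P1 e1 e2 e3 eta h1 h2 h3 k12 k13 k23 @ w2
                 @ r3_P2 e1 e2 e3 eta h1 h2 h3 k12 k13 k23 @ w3
                 @ r3_P3 e1 e2 e3 eta h1 h2 h3 k12 k13 k23 @ w4)
             (w1 @ r3_P1 (\<not> e1) (\<not> e2) (\<not> e3) eta h1 h2 h3 k12 k13 k23 @ w2
                 @ r3_P2 (\<not> e1) (\<not> e2) (\<not> e3) eta h1 h2 h3 k12 k13 k23 @ w3
                 @ r3_P3 (\<not> e1) (\<not> e2) (\<not> e3) eta h1 h2 h3 k12 k13 k23 @ w4)"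

definition virt_equiv :: "gword \<Rightarrow> gword \<Rightarrow> bool" where
  "virt_equiv = (\<lambda>u v. gmove u v \<or> gmove v u)\<^sup>*\<^sup>*"

text \<open>The arrow diagram A_n: arrow x has label 0, arrow y_j has label j.
Letters in counterclockwise order X+, Y1+,...,Yn+, X-, Yn-,...,Y1-.
x points from X+ to X- (X+ is over); y_j points from Yj- to Yj+ if n-j is even
(so Yj+ is over iff n-j is odd).\<close>

definition arrowA :: "nat \<Rightarrow> gword" where
  "arrowA n =
     [(0, True, True)]
     @ map (\<lambda>j. (j, odd (n - j), True)) [1..<n+1]
     @ [(0, False, False)]
     @ map (\<lambda>j. (j, even (n - j), False)) (rev [1..<n+1])"

end

theory Submission
  imports Defs
begin

definition lsg :: "letter \<Rightarrow> int" where "lsg l = (if snd (snd l) then 1 else -1)"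
definition SS :: "gword \<Rightarrow> int" where "SS w = sum_list (map lsg w)"
definition fl :: "nat \<Rightarrow> gword \<Rightarrow> gword" where "fl e w = filter (\<lambda>l. fst l = e) w"

fun gg :: "nat \<Rightarrow> nat \<Rightarrow> gword \<Rightarrow> int" where
  "gg e k [] = 0"
| "gg e k (l # w) = (if fst l = e then gg e (Suc k) w
      else (if k = 1 then lsg l else - lsg l) + gg e k w)"

lemma fl_simps[simp]: "fl e [] = []" "fl e (l # w) = (if fst l = e then l # fl e w else fl e w)"
  "fl e (u @ v) = fl e u @ fl e v"
  by (auto simp: fl_def)

lemma labels_simps[simp]: "labels [] = {}" "labels (l # w) = insert (fst l) (labels w)"
  "labels (u @ v) = labels u \<union> labels v"
  by (auto simp: labels_def)

lemma SS_simps[simp]: "SS [] = 0" "SS (l # w) = lsg l + SS w" "SS (u @ v) = SS u + SS v"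
  by (auto simp: SS_def)

lemma gg_append: "gg e k (u @ v) = gg e k u + gg e (k + length (fl e u)) v"
  by (induction u arbitrary: k) auto

lemma fl_nolab[simp]: "e \<notin> labels w \<Longrightarrow> fl e w = []"
  by (induction w) auto

lemma fl_nil_iff: "fl e w = [] \<longleftrightarrow> e \<notin> labels w"
  by (induction w) auto

lemma gg_nolab: "e \<notin> labels w \<Longrightarrow> gg e k w = (if k = 1 then SS w else - SS w)"
  by (induction w) auto

lemma gg_one: "length (fl e w) = 1 \<Longrightarrow> gg e 1 w = - gg e 0 w"
proof (induction w)
  case Nil then show ?case by simp
next
  case (Cons l w)
  show ?case
  proof (cases "fst l = e")
    case True
    then have "fl e w = []" using Cons.prems by simp
    then have "e \<notin> labels w" using fl_nil_iff by blast
    then show ?thesis using True by (simp add: gg_nolab)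
  next
    case False
    then show ?thesis using Cons by simp
  qed
qed

definition ind2 :: "gword \<Rightarrow> nat \<Rightarrow> int" where
  "ind2 w e = (if fst (snd (hd (fl e w))) then gg e 0 w else - gg e 0 w)"
definition eps :: "gword \<Rightarrow> nat \<Rightarrow> int" where
  "eps w e = (if fst (snd (fl e w ! 0)) then lsg (fl e w ! 0) else lsg (fl e w ! 1))"
definition AI :: "int \<Rightarrow> gword \<Rightarrow> int" where
  "AI k w = (\<Sum>e\<in>labels w. if ind2 w e = k then eps w e else 0)"

lemma finite_labels[simp]: "finite (labels w)" by (simp add: labels_def)

lemma wf_iff: "gauss_wf w \<longleftrightarrow> (\<forall>c\<in>labels w. \<exists>ov sg. fl c w = [(c,ov,sg),(c,\<not>ov,\<not>sg)])"
  by (simp add: gauss_wf_def labels_def fl_def)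

lemma sum_split: "finite E \<Longrightarrow> labels w \<subseteq> E \<Longrightarrow> SS w = (\<Sum>e\<in>E. SS (fl e w))"
proof (induction w)
  case Nil then show ?case by simp
next
  case (Cons l w)
  have "(\<Sum>e\<in>E. SS (fl e (l # w))) = (\<Sum>e\<in>E. (if fst l = e then lsg l else 0) + SS (fl e w))"
    by (rule sum.cong) auto
  also have "\<dots> = lsg l + (\<Sum>e\<in>E. SS (fl e w))"
    using Cons.prems by (simp add: sum.distrib)
  finally show ?case using Cons by simp
qed

lemma wf_SS: "gauss_wf w \<Longrightarrow> SS w = 0"
proof -
  assume w: "gauss_wf w"
  have "SS w = (\<Sum>e\<in>labels w. SS (fl e w))" by (rule sum_split) auto
  also have "\<dots> = 0"
  proof (rule sum.neutral, rule ballI)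
    fix e assume "e \<in> labels w"
    then obtain ov sg where "fl e w = [(e,ov,sg),(e,\<not>ov,\<not>sg)]" using w wf_iff by blast
    then show "SS (fl e w) = 0" by (simp add: lsg_def)
  qed
  finally show ?thesis .
qed


lemma rot_pair: "fst x = c \<Longrightarrow>
  (\<exists>ov sg. x # F = [(c,ov,sg),(c,\<not>ov,\<not>sg)]) \<longleftrightarrow> (\<exists>ov sg. F @ [x] = [(c,ov,sg),(c,\<not>ov,\<not>sg)])"
  apply (cases x; cases F)
   apply auto
  done

lemma fl_map_inj: "inj f \<Longrightarrow> fl (f e) (map (\<lambda>(c, ov, sg). (f c, ov, sg)) w) = map (\<lambda>(c, ov, sg). (f c, ov, sg)) (fl e w)"
  by (induction w) (auto dest: injD)

lemma labels_map: "labels (map (\<lambda>(c, ov, sg). (f c, ov, sg)) w) = f ` labels w"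
  by (induction w) auto

lemma wf_ext:
  assumes "labels v = labels u \<union> N" "labels u \<inter> N = {}"
    "\<forall>e\<in>N. \<exists>ov sg. fl e v = [(e,ov,sg),(e,\<not>ov,\<not>sg)]"
    "\<forall>e\<in>labels u. fl e v = fl e u"
  shows "gauss_wf u = gauss_wf v"
  unfolding wf_iff
proof
  assume H: "\<forall>c\<in>labels u. \<exists>ov sg. fl c u = [(c,ov,sg),(c,\<not>ov,\<not>sg)]"
  show "\<forall>c\<in>labels v. \<exists>ov sg. fl c v = [(c,ov,sg),(c,\<not>ov,\<not>sg)]"
  proof
    fix c assume "c \<in> labels v"
    then have "c \<in> labels u \<or> c \<in> N" using assms(1) by auto
    then show "\<exists>ov sg. fl c v = [(c,ov,sg),(c,\<not>ov,\<not>sg)]"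
      using H assms(3,4) by auto
  qed
next
  assume H: "\<forall>c\<in>labels v. \<exists>ov sg. fl c v = [(c,ov,sg),(c,\<not>ov,\<not>sg)]"
  show "\<forall>c\<in>labels u. \<exists>ov sg. fl c u = [(c,ov,sg),(c,\<not>ov,\<not>sg)]"
  proof
    fix c assume c: "c \<in> labels u"
    then have "c \<in> labels v" using assms(1) by auto
    then show "\<exists>ov sg. fl c u = [(c,ov,sg),(c,\<not>ov,\<not>sg)]"
      using H assms(4) c by metis
  qed
qed

lemma P1_rev: "r3_P1 (\<not> e1) (\<not> e2) (\<not> e3) eta h1 h2 h3 k12 k13 k23 = rev (r3_P1 e1 e2 e3 eta h1 h2 h3 k12 k13 k23)"
  by (simp add: r3_P1_def r3_sg_def Let_def)
lemma P2_rev: "r3_P2 (\<not> e1) (\<not> e2) (\<not> e3) eta h1 h2 h3 k12 k13 k23 = rev (r3_P2 e1 e2 e3 eta h1 h2 h3 k12 k13 k23)"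
  by (simp add: r3_P2_def r3_sg_def Let_def)
lemma P3_rev: "r3_P3 (\<not> e1) (\<not> e2) (\<not> e3) eta h1 h2 h3 k12 k13 k23 = rev (r3_P3 e1 e2 e3 eta h1 h2 h3 k12 k13 k23)"
  by (simp add: r3_P3_def r3_sg_def Let_def)

lemma fl_rev2: "fst a \<noteq> fst b \<Longrightarrow> fl e (rev [a,b]) = fl e [a,b]"
  by auto
lemma P_len: "\<exists>a b. r3_P1 e1 e2 e3 eta h1 h2 h3 k12 k13 k23 = [a,b] \<and> fst a \<noteq> fst b \<and> {fst a, fst b} = {k12,k13}"
  "\<exists>a b. r3_P2 e1 e2 e3 eta h1 h2 h3 k12 k13 k23 = [a,b] \<and> fst a \<noteq> fst b \<and> {fst a, fst b} = {k12,k23}"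
  "\<exists>a b. r3_P3 e1 e2 e3 eta h1 h2 h3 k12 k13 k23 = [a,b] \<and> fst a \<noteq> fst b \<and> {fst a, fst b} = {k13,k23}"
  if "k12 \<noteq> k13" "k12 \<noteq> k23" "k13 \<noteq> k23"
  using that by (auto simp: r3_P1_def r3_P2_def r3_P3_def Let_def)


lemma labels_rev[simp]: "labels (rev w) = labels w" by (simp add: labels_def)

lemma fl_revP:
  assumes "k12 \<noteq> k13" "k12 \<noteq> k23" "k13 \<noteq> k23"
  shows "fl e (rev (r3_P1 e1 e2 e3 eta h1 h2 h3 k12 k13 k23)) = fl e (r3_P1 e1 e2 e3 eta h1 h2 h3 k12 k13 k23)"
    "fl e (rev (r3_P2 e1 e2 e3 eta h1 h2 h3 k12 k13 k23)) = fl e (r3_P2 e1 e2 e3 eta h1 h2 h3 k12 k13 k23)"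
    "fl e (rev (r3_P3 e1 e2 e3 eta h1 h2 h3 k12 k13 k23)) = fl e (r3_P3 e1 e2 e3 eta h1 h2 h3 k12 k13 k23)"
proof -
  obtain a b where "r3_P1 e1 e2 e3 eta h1 h2 h3 k12 k13 k23 = [a,b]" "fst a \<noteq> fst b" using P_len(1)[OF assms] by blast
  then show "fl e (rev (r3_P1 e1 e2 e3 eta h1 h2 h3 k12 k13 k23)) = fl e (r3_P1 e1 e2 e3 eta h1 h2 h3 k12 k13 k23)" by auto
  obtain a b where "r3_P2 e1 e2 e3 eta h1 h2 h3 k12 k13 k23 = [a,b]" "fst a \<noteq> fst b" using P_len(2)[OF assms] by blast
  then show "fl e (rev (r3_P2 e1 e2 e3 eta h1 h2 h3 k12 k13 k23)) = fl e (r3_P2 e1 e2 e3 eta h1 h2 h3 k12 k13 k23)" by auto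
  obtain a b where "r3_P3 e1 e2 e3 eta h1 h2 h3 k12 k13 k23 = [a,b]" "fst a \<noteq> fst b" using P_len(3)[OF assms] by blast
  then show "fl e (rev (r3_P3 e1 e2 e3 eta h1 h2 h3 k12 k13 k23)) = fl e (r3_P3 e1 e2 e3 eta h1 h2 h3 k12 k13 k23)" by auto
qed

lemma wf_step: "gmove u v \<Longrightarrow> gauss_wf u = gauss_wf v"
proof (induction rule: gmove.induct)
  case (rot x w)
  have "(\<exists>ov sg. fl c (x # w) = [(c,ov,sg),(c,\<not>ov,\<not>sg)]) \<longleftrightarrow> (\<exists>ov sg. fl c (w @ [x]) = [(c,ov,sg),(c,\<not>ov,\<not>sg)])" for c
    using rot_pair[of x c "fl c w"] by auto
  then show ?case unfolding wf_iff by auto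
next
  case (relabel f w)
  show ?case unfolding wf_iff labels_map using fl_map_inj[OF relabel]
    by (auto simp: inj_eq[OF relabel])
next
  case (r1 c w1 w2 ov sg)
  show ?case
    apply (rule wf_ext[where N="{c}"])
    using r1 by auto
next
  case (r2a c d w1 w2 w3 sg)
  show ?case
    apply (rule wf_ext[where N="{c,d}"])
    using r2a by auto
next
  case (r2b c d w1 w2 w3 sg)
  show ?case
    apply (rule wf_ext[where N="{c,d}"])
    using r2b by auto
next
  case (r3 h1 h2 h3 k12 k13 k23 w1 w2 w3 w4 e1 e2 e3 eta)
  show ?case
    unfolding P1_rev P2_rev P3_rev
    apply (rule wf_ext[where N="{}"])
    using fl_revP[OF r3(4,5,6), of _ e1 e2 e3 eta h1 h2 h3] by (simp_all add: labels_rev)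
qed


lemma AI_cong:
  assumes "labels u = labels v" "\<forall>e\<in>labels u. ind2 u e = ind2 v e \<and> eps u e = eps v e"
  shows "AI k u = AI k v"
  unfolding AI_def using assms by (intro sum.cong) auto

lemma gg_map_inj: "inj f \<Longrightarrow> gg (f e) k (map (\<lambda>(c, ov, sg). (f c, ov, sg)) w) = gg e k w"
  by (induction w arbitrary: k) (auto simp: inj_eq lsg_def)

lemma AI_relabel: assumes f: "inj f" shows "AI k w = AI k (map (\<lambda>(c, ov, sg). (f c, ov, sg)) w)"
proof -
  let ?F = "(\<lambda>(c, ov, sg). (f c, ov, sg)) :: letter \<Rightarrow> letter"
  have "AI k (map ?F w) = (\<Sum>e\<in>f ` labels w. if ind2 (map ?F w) e = k then eps (map ?F w) e else 0)"
    unfolding AI_def labels_map ..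
  also have "\<dots> = (\<Sum>e\<in>labels w. if ind2 (map ?F w) (f e) = k then eps (map ?F w) (f e) else 0)"
    using sum.reindex[OF inj_on_subset[OF f subset_UNIV], of "\<lambda>e. if ind2 (map ?F w) e = k then eps (map ?F w) e else 0" "labels w"]
    by (simp add: comp_def)
  also have "\<dots> = AI k w" unfolding AI_def
  proof (rule sum.cong)
    fix e assume "e \<in> labels w"
    then have ne: "fl e w \<noteq> []" using fl_nil_iff by blast
    have "ind2 (map ?F w) (f e) = ind2 w e" unfolding ind2_def fl_map_inj[OF f] gg_map_inj[OF f]
      using ne by (cases "fl e w") auto
    moreover have "eps (map ?F w) (f e) = eps w e" unfolding eps_def fl_map_inj[OF f]
      using ne apply (cases "fl e w") apply simp
      subgoal for a l by (cases l) (auto simp: lsg_def split: prod.splits)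
      done
    ultimately show "(if ind2 (map ?F w) (f e) = k then eps (map ?F w) (f e) else 0) =
      (if ind2 w e = k then eps w e else 0)" by simp
  qed simp
  finally show ?thesis by simp
qed

lemma wf_fl: "gauss_wf w \<Longrightarrow> e \<in> labels w \<Longrightarrow> \<exists>ov sg. fl e w = [(e,ov,sg),(e,\<not>ov,\<not>sg)]"
  using wf_iff by blast

lemma AI_rot: assumes wf: "gauss_wf (x # w)" shows "AI k (x # w) = AI k (w @ [x])"
proof (rule AI_cong)
  show "labels (x # w) = labels (w @ [x])" by auto
  show "\<forall>e\<in>labels (x # w). ind2 (x # w) e = ind2 (w @ [x]) e \<and> eps (x # w) e = eps (w @ [x]) e"
  proof
    fix e assume e: "e \<in> labels (x # w)"
    obtain ov sg where F: "fl e (x # w) = [(e,ov,sg),(e,\<not>ov,\<not>sg)]" using wf_fl[OF wf e] by blast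
    show "ind2 (x # w) e = ind2 (w @ [x]) e \<and> eps (x # w) e = eps (w @ [x]) e"
    proof (cases "fst x = e")
      case True
      then have x: "x = (e,ov,sg)" and w: "fl e w = [(e,\<not>ov,\<not>sg)]" using F by auto
      have g: "gg e 1 w = - gg e 0 w" using gg_one w by simp
      show ?thesis using x w g True by (auto simp: ind2_def eps_def gg_append)
    next
      case False
      then have w: "fl e w = [(e,ov,sg),(e,\<not>ov,\<not>sg)]" using F by auto
      show ?thesis using w False by (auto simp: ind2_def eps_def gg_append)
    qed
  qed
qed


lemma AI_ext:
  assumes "labels v = labels u \<union> N" "labels u \<inter> N = {}" "finite N"
    "\<forall>e\<in>labels u. ind2 u e = ind2 v e \<and> eps u e = eps v e"
    "(\<Sum>e\<in>N. if ind2 v e = k then eps v e else 0) = 0"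
  shows "AI k u = AI k v"
proof -
  have "AI k v = (\<Sum>e\<in>labels u. if ind2 v e = k then eps v e else 0) + (\<Sum>e\<in>N. if ind2 v e = k then eps v e else 0)"
    unfolding AI_def assms(1) using assms(2,3) by (simp add: sum.union_disjoint)
  also have "(\<Sum>e\<in>labels u. if ind2 v e = k then eps v e else 0) = AI k u"
    unfolding AI_def by (rule sum.cong) (use assms(4) in auto)
  then have "(\<Sum>e\<in>labels u. if ind2 v e = k then eps v e else 0) + (\<Sum>e\<in>N. if ind2 v e = k then eps v e else 0) = AI k u"
    using assms(5) by simp
  finally show ?thesis by simp
qed

lemma lsg_pair[simp]: "lsg (c, ov, sg) + lsg (c', ov', \<not> sg) = 0" "lsg (c', ov', \<not> sg) + lsg (c, ov, sg) = 0"
  by (auto simp: lsg_def)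

lemma gg_insert0: "e \<notin> labels B \<Longrightarrow> SS B = 0 \<Longrightarrow> gg e k (u @ B @ v) = gg e k (u @ v)"
  by (simp add: gg_append gg_nolab)

lemma same_ie: "fl e u = fl e v \<Longrightarrow> gg e 0 u = gg e 0 v \<Longrightarrow> ind2 u e = ind2 v e \<and> eps u e = eps v e"
  unfolding ind2_def eps_def by simp

lemma AI_r1:
  assumes c: "c \<notin> labels (w1 @ w2)" and wf: "gauss_wf (w1 @ w2)" and k: "k \<noteq> 0"
  shows "AI k (w1 @ w2) = AI k (w1 @ [(c, ov, sg), (c, \<not> ov, \<not> sg)] @ w2)"
proof (rule AI_ext[where N="{c}"])
  have S: "SS w1 + SS w2 = 0" using wf_SS[OF wf] by simp
  have "ind2 (w1 @ [(c, ov, sg), (c, \<not> ov, \<not> sg)] @ w2) c = 0"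
    using c S by (simp add: ind2_def gg_append gg_nolab)
  then show "(\<Sum>e\<in>{c}. if ind2 (w1 @ [(c, ov, sg), (c, \<not> ov, \<not> sg)] @ w2) e = k
      then eps (w1 @ [(c, ov, sg), (c, \<not> ov, \<not> sg)] @ w2) e else 0) = 0" using k by simp
  show "\<forall>e\<in>labels (w1 @ w2). ind2 (w1 @ w2) e = ind2 (w1 @ [(c, ov, sg), (c, \<not> ov, \<not> sg)] @ w2) e \<and>
     eps (w1 @ w2) e = eps (w1 @ [(c, ov, sg), (c, \<not> ov, \<not> sg)] @ w2) e"
  proof
    fix e assume e: "e \<in> labels (w1 @ w2)"
    then have ne: "e \<noteq> c" using c by auto
    show "ind2 (w1 @ w2) e = ind2 (w1 @ [(c, ov, sg), (c, \<not> ov, \<not> sg)] @ w2) e \<and>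
     eps (w1 @ w2) e = eps (w1 @ [(c, ov, sg), (c, \<not> ov, \<not> sg)] @ w2) e"
      apply (rule same_ie)
      using ne apply simp
      apply (rule gg_insert0[symmetric])
      using ne by simp_all
  qed
qed (use c in auto)

lemma r2_other:
  assumes "e \<noteq> c" "e \<noteq> d" "SS B1 = 0" "SS B2 = 0" "labels B1 \<subseteq> {c,d}" "labels B2 \<subseteq> {c,d}"
  shows "ind2 (w1 @ w2 @ w3) e = ind2 (w1 @ B1 @ w2 @ B2 @ w3) e \<and> eps (w1 @ w2 @ w3) e = eps (w1 @ B1 @ w2 @ B2 @ w3) e"
proof (rule same_ie)
  have n1: "e \<notin> labels B1" and n2: "e \<notin> labels B2" using assms by auto
  show "fl e (w1 @ w2 @ w3) = fl e (w1 @ B1 @ w2 @ B2 @ w3)" using n1 n2 by simp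
  have "gg e 0 (w1 @ B1 @ (w2 @ B2 @ w3)) = gg e 0 (w1 @ (w2 @ B2 @ w3))"
    by (rule gg_insert0[OF n1 assms(3)])
  also have "\<dots> = gg e 0 ((w1 @ w2) @ B2 @ w3)" by simp
  also have "\<dots> = gg e 0 ((w1 @ w2) @ w3)" by (rule gg_insert0[OF n2 assms(4)])
  finally show "gg e 0 (w1 @ w2 @ w3) = gg e 0 (w1 @ B1 @ w2 @ B2 @ w3)" by simp
qed

lemma AI_r2a:
  assumes cd: "c \<noteq> d" "c \<notin> labels (w1 @ w2 @ w3)" "d \<notin> labels (w1 @ w2 @ w3)"
  shows "AI k (w1 @ w2 @ w3) = AI k (w1 @ [(c, True, sg), (d, True, \<not> sg)] @ w2 @ [(c, False, \<not> sg), (d, False, sg)] @ w3)"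
    (is "_ = AI k ?v")
proof (rule AI_ext[where N="{c,d}"])
  have "ind2 ?v c = ind2 ?v d" using cd by (simp add: ind2_def gg_append gg_nolab lsg_def)
  moreover have "eps ?v c = - eps ?v d" using cd by (simp add: eps_def lsg_def)
  ultimately show "(\<Sum>e\<in>{c,d}. if ind2 ?v e = k then eps ?v e else 0) = 0" using cd by simp
  show "\<forall>e\<in>labels (w1 @ w2 @ w3). ind2 (w1 @ w2 @ w3) e = ind2 ?v e \<and> eps (w1 @ w2 @ w3) e = eps ?v e"
  proof
    fix e assume "e \<in> labels (w1 @ w2 @ w3)"
    then have "e \<noteq> c" "e \<noteq> d" using cd by auto
    then show "ind2 (w1 @ w2 @ w3) e = ind2 ?v e \<and> eps (w1 @ w2 @ w3) e = eps ?v e"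
      by (intro r2_other[of e c d "[(c, True, sg), (d, True, \<not> sg)]" "[(c, False, \<not> sg), (d, False, sg)]" w1 w2 w3]) (auto simp: lsg_def)
  qed
qed (use cd in auto)

lemma AI_r2b:
  assumes cd: "c \<noteq> d" "c \<notin> labels (w1 @ w2 @ w3)" "d \<notin> labels (w1 @ w2 @ w3)"
  shows "AI k (w1 @ w2 @ w3) = AI k (w1 @ [(c, True, sg), (d, True, \<not> sg)] @ w2 @ [(d, False, sg), (c, False, \<not> sg)] @ w3)"
    (is "_ = AI k ?v")
proof (rule AI_ext[where N="{c,d}"])
  have "ind2 ?v c = ind2 ?v d" using cd by (simp add: ind2_def gg_append gg_nolab lsg_def)
  moreover have "eps ?v c = - eps ?v d" using cd by (simp add: eps_def lsg_def)
  ultimately show "(\<Sum>e\<in>{c,d}. if ind2 ?v e = k then eps ?v e else 0) = 0" using cd by simp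
  show "\<forall>e\<in>labels (w1 @ w2 @ w3). ind2 (w1 @ w2 @ w3) e = ind2 ?v e \<and> eps (w1 @ w2 @ w3) e = eps ?v e"
  proof
    fix e assume "e \<in> labels (w1 @ w2 @ w3)"
    then have "e \<noteq> c" "e \<noteq> d" using cd by auto
    then show "ind2 (w1 @ w2 @ w3) e = ind2 ?v e \<and> eps (w1 @ w2 @ w3) e = eps ?v e"
      by (intro r2_other[of e c d "[(c, True, sg), (d, True, \<not> sg)]" "[(d, False, sg), (c, False, \<not> sg)]" w1 w2 w3]) (auto simp: lsg_def)
  qed
qed (use cd in auto)

lemma SS_rev[simp]: "SS (rev w) = SS w" by (induction w) auto

lemma gg7: "gg e 0 (w1 @ P1 @ w2 @ P2 @ w3 @ P3 @ w4) =
   gg e 0 w1 + gg e (length (fl e w1)) P1 + gg e (length (fl e w1) + length (fl e P1)) w2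
   + gg e (length (fl e w1) + length (fl e P1) + length (fl e w2)) P2
   + gg e (length (fl e w1) + length (fl e P1) + length (fl e w2) + length (fl e P2)) w3
   + gg e (length (fl e w1) + length (fl e P1) + length (fl e w2) + length (fl e P2) + length (fl e w3)) P3
   + gg e (length (fl e w1) + length (fl e P1) + length (fl e w2) + length (fl e P2) + length (fl e w3) + length (fl e P3)) w4"
  by (simp add: gg_append add.assoc)

lemma core12: "k12 \<noteq> k13 \<Longrightarrow> k12 \<noteq> k23 \<Longrightarrow> k13 \<noteq> k23 \<Longrightarrow>
  gg k12 0 (r3_P1 e1 e2 e3 eta h1 h2 h3 k12 k13 k23) + gg k12 1 (r3_P2 e1 e2 e3 eta h1 h2 h3 k12 k13 k23) + gg k12 (Suc (Suc 0)) (r3_P3 e1 e2 e3 eta h1 h2 h3 k12 k13 k23)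
  = gg k12 0 (rev (r3_P1 e1 e2 e3 eta h1 h2 h3 k12 k13 k23)) + gg k12 1 (rev (r3_P2 e1 e2 e3 eta h1 h2 h3 k12 k13 k23)) + gg k12 (Suc (Suc 0)) (rev (r3_P3 e1 e2 e3 eta h1 h2 h3 k12 k13 k23))"
  by (cases e1; cases e2; cases e3; cases eta) (simp_all add: r3_P1_def r3_P2_def r3_P3_def Let_def r3_sg_def lsg_def)

lemma core13: "k12 \<noteq> k13 \<Longrightarrow> k12 \<noteq> k23 \<Longrightarrow> k13 \<noteq> k23 \<Longrightarrow>
  gg k13 0 (r3_P1 e1 e2 e3 eta h1 h2 h3 k12 k13 k23) + gg k13 1 (r3_P2 e1 e2 e3 eta h1 h2 h3 k12 k13 k23) + gg k13 1 (r3_P3 e1 e2 e3 eta h1 h2 h3 k12 k13 k23)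
  = gg k13 0 (rev (r3_P1 e1 e2 e3 eta h1 h2 h3 k12 k13 k23)) + gg k13 1 (rev (r3_P2 e1 e2 e3 eta h1 h2 h3 k12 k13 k23)) + gg k13 1 (rev (r3_P3 e1 e2 e3 eta h1 h2 h3 k12 k13 k23))"
  by (cases e1; cases e2; cases e3; cases eta) (simp_all add: r3_P1_def r3_P2_def r3_P3_def Let_def r3_sg_def lsg_def)

lemma core23: "k12 \<noteq> k13 \<Longrightarrow> k12 \<noteq> k23 \<Longrightarrow> k13 \<noteq> k23 \<Longrightarrow>
  gg k23 0 (r3_P1 e1 e2 e3 eta h1 h2 h3 k12 k13 k23) + gg k23 0 (r3_P2 e1 e2 e3 eta h1 h2 h3 k12 k13 k23) + gg k23 1 (r3_P3 e1 e2 e3 eta h1 h2 h3 k12 k13 k23)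
  = gg k23 0 (rev (r3_P1 e1 e2 e3 eta h1 h2 h3 k12 k13 k23)) + gg k23 0 (rev (r3_P2 e1 e2 e3 eta h1 h2 h3 k12 k13 k23)) + gg k23 1 (rev (r3_P3 e1 e2 e3 eta h1 h2 h3 k12 k13 k23))"
  by (cases e1; cases e2; cases e3; cases eta) (simp_all add: r3_P1_def r3_P2_def r3_P3_def Let_def r3_sg_def lsg_def)

lemma lensP: "k12 \<noteq> k13 \<Longrightarrow> k12 \<noteq> k23 \<Longrightarrow> k13 \<noteq> k23 \<Longrightarrow>
  length (fl k12 (r3_P1 e1 e2 e3 eta h1 h2 h3 k12 k13 k23)) = 1 \<and>
  length (fl k12 (r3_P2 e1 e2 e3 eta h1 h2 h3 k12 k13 k23)) = 1 \<and>
  length (fl k13 (r3_P1 e1 e2 e3 eta h1 h2 h3 k12 k13 k23)) = 1 \<and>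
  length (fl k13 (r3_P2 e1 e2 e3 eta h1 h2 h3 k12 k13 k23)) = 0 \<and>
  length (fl k23 (r3_P1 e1 e2 e3 eta h1 h2 h3 k12 k13 k23)) = 0 \<and>
  length (fl k23 (r3_P2 e1 e2 e3 eta h1 h2 h3 k12 k13 k23)) = 1"
  by (simp add: r3_P1_def r3_P2_def Let_def)

lemma gg_r3:
  assumes d: "k12 \<noteq> k13" "k12 \<noteq> k23" "k13 \<noteq> k23"
    and nl: "{k12, k13, k23} \<inter> labels (w1 @ w2 @ w3 @ w4) = {}"
  shows "gg e 0 (w1 @ r3_P1 e1 e2 e3 eta h1 h2 h3 k12 k13 k23 @ w2 @ r3_P2 e1 e2 e3 eta h1 h2 h3 k12 k13 k23 @ w3 @ r3_P3 e1 e2 e3 eta h1 h2 h3 k12 k13 k23 @ w4)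
       = gg e 0 (w1 @ rev (r3_P1 e1 e2 e3 eta h1 h2 h3 k12 k13 k23) @ w2 @ rev (r3_P2 e1 e2 e3 eta h1 h2 h3 k12 k13 k23) @ w3 @ rev (r3_P3 e1 e2 e3 eta h1 h2 h3 k12 k13 k23) @ w4)"
  (is "gg e 0 (w1 @ ?P1 @ w2 @ ?P2 @ w3 @ ?P3 @ w4) = _")
proof -
  note FR = fl_revP[OF d, of e e1 e2 e3 eta h1 h2 h3]
  note L = lensP[OF d, of e1 e2 e3 eta h1 h2 h3]
  have n: "fl k w1 = []" "fl k w2 = []" "fl k w3 = []" "fl k w4 = []" if "k \<in> {k12,k13,k23}" for k
    using nl that by auto
  consider "e = k12" | "e = k13" | "e = k23" | "e \<notin> {k12,k13,k23}" by blast
  then show ?thesis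
  proof cases
    case 1
    then show ?thesis unfolding gg7 FR using n[of k12] L core12[OF d, of e1 e2 e3 eta h1 h2 h3] by (simp add: add.assoc)
  next
    case 2
    then show ?thesis unfolding gg7 FR using n[of k13] L core13[OF d, of e1 e2 e3 eta h1 h2 h3] by (simp add: add.assoc)
  next
    case 3
    then show ?thesis unfolding gg7 FR using n[of k23] L core23[OF d, of e1 e2 e3 eta h1 h2 h3] by (simp add: add.assoc)
  next
    case 4
    have "e \<notin> labels ?P1" "e \<notin> labels ?P2" "e \<notin> labels ?P3"
      using 4 by (auto simp: r3_P1_def r3_P2_def r3_P3_def Let_def)
    then show ?thesis unfolding gg7 FR by (simp add: gg_nolab)
  qed
qed

lemma AI_r3:
  assumes d: "k12 \<noteq> k13" "k12 \<noteq> k23" "k13 \<noteq> k23"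
    and nl: "{k12, k13, k23} \<inter> labels (w1 @ w2 @ w3 @ w4) = {}"
  shows "AI k (w1 @ r3_P1 e1 e2 e3 eta h1 h2 h3 k12 k13 k23 @ w2 @ r3_P2 e1 e2 e3 eta h1 h2 h3 k12 k13 k23 @ w3 @ r3_P3 e1 e2 e3 eta h1 h2 h3 k12 k13 k23 @ w4)
       = AI k (w1 @ r3_P1 (\<not> e1) (\<not> e2) (\<not> e3) eta h1 h2 h3 k12 k13 k23 @ w2 @ r3_P2 (\<not> e1) (\<not> e2) (\<not> e3) eta h1 h2 h3 k12 k13 k23 @ w3 @ r3_P3 (\<not> e1) (\<not> e2) (\<not> e3) eta h1 h2 h3 k12 k13 k23 @ w4)"
  unfolding P1_rev P2_rev P3_rev
proof (rule AI_cong)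
  note PL = P_len[OF d, of e1 e2 e3 eta h1 h2 h3]
  have F: "fl e (w1 @ r3_P1 e1 e2 e3 eta h1 h2 h3 k12 k13 k23 @ w2 @ r3_P2 e1 e2 e3 eta h1 h2 h3 k12 k13 k23 @ w3 @ r3_P3 e1 e2 e3 eta h1 h2 h3 k12 k13 k23 @ w4)
      = fl e (w1 @ rev (r3_P1 e1 e2 e3 eta h1 h2 h3 k12 k13 k23) @ w2 @ rev (r3_P2 e1 e2 e3 eta h1 h2 h3 k12 k13 k23) @ w3 @ rev (r3_P3 e1 e2 e3 eta h1 h2 h3 k12 k13 k23) @ w4)" for e
    using PL by auto
  show "labels (w1 @ r3_P1 e1 e2 e3 eta h1 h2 h3 k12 k13 k23 @ w2 @ r3_P2 e1 e2 e3 eta h1 h2 h3 k12 k13 k23 @ w3 @ r3_P3 e1 e2 e3 eta h1 h2 h3 k12 k13 k23 @ w4)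
      = labels (w1 @ rev (r3_P1 e1 e2 e3 eta h1 h2 h3 k12 k13 k23) @ w2 @ rev (r3_P2 e1 e2 e3 eta h1 h2 h3 k12 k13 k23) @ w3 @ rev (r3_P3 e1 e2 e3 eta h1 h2 h3 k12 k13 k23) @ w4)"
    by (simp add: labels_def)
  show "\<forall>e\<in>labels (w1 @ r3_P1 e1 e2 e3 eta h1 h2 h3 k12 k13 k23 @ w2 @ r3_P2 e1 e2 e3 eta h1 h2 h3 k12 k13 k23 @ w3 @ r3_P3 e1 e2 e3 eta h1 h2 h3 k12 k13 k23 @ w4).
     ind2 (w1 @ r3_P1 e1 e2 e3 eta h1 h2 h3 k12 k13 k23 @ w2 @ r3_P2 e1 e2 e3 eta h1 h2 h3 k12 k13 k23 @ w3 @ r3_P3 e1 e2 e3 eta h1 h2 h3 k12 k13 k23 @ w4) e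
       = ind2 (w1 @ rev (r3_P1 e1 e2 e3 eta h1 h2 h3 k12 k13 k23) @ w2 @ rev (r3_P2 e1 e2 e3 eta h1 h2 h3 k12 k13 k23) @ w3 @ rev (r3_P3 e1 e2 e3 eta h1 h2 h3 k12 k13 k23) @ w4) e \<and>
     eps (w1 @ r3_P1 e1 e2 e3 eta h1 h2 h3 k12 k13 k23 @ w2 @ r3_P2 e1 e2 e3 eta h1 h2 h3 k12 k13 k23 @ w3 @ r3_P3 e1 e2 e3 eta h1 h2 h3 k12 k13 k23 @ w4) e
       = eps (w1 @ rev (r3_P1 e1 e2 e3 eta h1 h2 h3 k12 k13 k23) @ w2 @ rev (r3_P2 e1 e2 e3 eta h1 h2 h3 k12 k13 k23) @ w3 @ rev (r3_P3 e1 e2 e3 eta h1 h2 h3 k12 k13 k23) @ w4) e"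
    unfolding ind2_def eps_def F gg_r3[OF d nl] by simp
qed

lemma inv_step: "gmove u v \<Longrightarrow> gauss_wf u \<Longrightarrow> k \<noteq> 0 \<Longrightarrow> AI k u = AI k v"
proof (induction rule: gmove.induct)
  case (rot x w) show ?case by (rule AI_rot[OF rot(1)])
next
  case (relabel f w) show ?case by (rule AI_relabel[OF relabel(1)])
next
  case (r1 c w1 w2 ov sg) show ?case by (rule AI_r1[OF r1(1,2,3)])
next
  case (r2a c d w1 w2 w3 sg) show ?case by (rule AI_r2a[OF r2a(1,2,3)])
next
  case (r2b c d w1 w2 w3 sg) show ?case by (rule AI_r2b[OF r2b(1,2,3)])
next
  case (r3 h1 h2 h3 k12 k13 k23 w1 w2 w3 w4 e1 e2 e3 eta) show ?case by (rule AI_r3[OF r3(4,5,6,7)])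
qed

lemma equiv_inv: "virt_equiv u v \<Longrightarrow> gauss_wf u \<Longrightarrow> k \<noteq> 0 \<Longrightarrow> gauss_wf v \<and> AI k u = AI k v"
  unfolding virt_equiv_def
proof (induction rule: rtranclp_induct)
  case base then show ?case by simp
next
  case (step y z)
  then have wy: "gauss_wf y" and A: "AI k u = AI k y" by auto
  from step(2) show ?case
  proof
    assume m: "gmove y z"
    then have "gauss_wf z" using wf_step wy by blast
    then show ?thesis using inv_step[OF m wy step(5)] A by simp
  next
    assume m: "gmove z y"
    then have wz: "gauss_wf z" using wf_step wy by blast
    then show ?thesis using inv_step[OF m wz step(5)] A by simp
  qed
qed


lemma labels_Y[simp]: "labels (map (\<lambda>j. (j, P j, b)) xs) = set xs"
  by (induction xs) auto

lemma SS_Y[simp]: "SS (map (\<lambda>j. (j, P j, b)) xs) = (if b then int (length xs) else - int (length xs))"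
  by (induction xs) (auto simp: lsg_def)

lemma labels_A: "labels (arrowA n) = {0..n}"
proof -
  have "labels (arrowA n) = insert 0 (set [1..<n+1])" unfolding arrowA_def by simp
  also have "\<dots> = {0..n}" by (auto simp del: upt_Suc)
  finally show ?thesis .
qed

lemma upt_split: "1 \<le> j \<Longrightarrow> j \<le> n \<Longrightarrow> [1..<n+1] = [1..<j] @ j # [Suc j..<n+1]"
proof -
  assume a: "1 \<le> j" "j \<le> n"
  have "[1..<n+1] = [1..<j] @ [j..<n+1]" using upt_add_eq_append[of 1 j "n+1-j"] a by simp
  also have "[j..<n+1] = j # [Suc j..<n+1]" using a by (simp add: upt_conv_Cons)
  finally show ?thesis .
qed

lemma A0: "ind2 (arrowA n) 0 = 2 * int n" "eps (arrowA n) 0 = 1"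
  "fl 0 (arrowA n) = [(0,True,True),(0,False,False)]"
  by (auto simp: arrowA_def ind2_def eps_def gg_append gg_nolab lsg_def)

lemma Aj: assumes "1 \<le> j" "j \<le> n"
  shows "ind2 (arrowA n) j \<in> {2, -2}"
    "fl j (arrowA n) = [(j, odd (n - j), True), (j, \<not> odd (n - j), \<not> True)]"
proof -
  have w: "arrowA n = [(0, True, True)] @ map (\<lambda>j. (j, odd (n - j), True)) [1..<j] @ [(j, odd (n - j), True)]
     @ map (\<lambda>j. (j, odd (n - j), True)) [Suc j..<n+1] @ [(0, False, False)]
     @ map (\<lambda>j. (j, even (n - j), False)) (rev [Suc j..<n+1]) @ [(j, even (n - j), False)] @ map (\<lambda>j. (j, even (n - j), False)) (rev [1..<j])"
    unfolding arrowA_def using upt_split[OF assms] by simp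
  have nj: "j \<notin> labels (map (\<lambda>j. (j, P j, b)) (rev [Suc j..<n+1]))" "j \<notin> labels (map (\<lambda>j. (j, P j, b)) [Suc j..<n+1])"
    "j \<notin> labels (map (\<lambda>j. (j, P j, b)) (rev [1..<j]))" "j \<notin> labels (map (\<lambda>j. (j, P j, b)) [1..<j])" for P b
    by auto
  have F: "fl j (arrowA n) = [(j, odd (n - j), True), (j, even (n - j), False)]"
    unfolding w using nj assms by simp
  then show "fl j (arrowA n) = [(j, odd (n - j), True), (j, \<not> odd (n - j), \<not> True)]" by simp
  have g: "gg j 0 (arrowA n) = -2"
    unfolding w using nj assms by (simp add: gg_append gg_nolab lsg_def)
  show "ind2 (arrowA n) j \<in> {2, -2}" unfolding ind2_def g by simp
qed

lemma wf_A: "gauss_wf (arrowA n)"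
  unfolding wf_iff labels_A
proof
  fix c assume "c \<in> {0..n}"
  then consider "c = 0" | "1 \<le> c \<and> c \<le> n" by force
  then show "\<exists>ov sg. fl c (arrowA n) = [(c,ov,sg),(c,\<not>ov,\<not>sg)]"
  proof cases
    case 1 then show ?thesis using A0(3) by auto
  next
    case 2 then show ?thesis using Aj(2)[of c n] by blast
  qed
qed

lemma AI_A: assumes N: "2 \<le> N" shows "AI (2 * int N) (arrowA n) = (if n = N then 1 else 0)"
proof -
  have "AI (2 * int N) (arrowA n) = (\<Sum>e\<in>insert 0 {1..n}. if ind2 (arrowA n) e = 2 * int N then eps (arrowA n) e else 0)"
    unfolding AI_def labels_A by (rule sum.cong) auto
  also have "\<dots> = (if ind2 (arrowA n) 0 = 2 * int N then eps (arrowA n) 0 else 0)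
     + (\<Sum>e\<in>{1..n}. if ind2 (arrowA n) e = 2 * int N then eps (arrowA n) e else 0)"
    by (subst sum.insert) auto
  also have "(\<Sum>e\<in>{1..n}. if ind2 (arrowA n) e = 2 * int N then eps (arrowA n) e else 0) = 0"
  proof (rule sum.neutral, rule ballI)
    fix e assume "e \<in> {1..n}"
    then have "ind2 (arrowA n) e \<in> {2,-2}" using Aj(1)[of e n] by auto
    then show "(if ind2 (arrowA n) e = 2 * int N then eps (arrowA n) e else 0) = 0" using N by auto
  qed
  finally show ?thesis using A0 by simp
qed

theorem theorem11:
  fixes m n :: nat
  assumes "0 < m" and "0 < n" and "m \<noteq> n"
  shows "\<not> virt_equiv (arrowA m) (arrowA n)"
proof
  assume E: "virt_equiv (arrowA m) (arrowA n)"
  define N where "N = max m n"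
  have N: "2 \<le> N" using assms unfolding N_def by auto
  have "AI (2 * int N) (arrowA m) = AI (2 * int N) (arrowA n)"
    using equiv_inv[OF E wf_A] N by simp
  then show False using AI_A[OF N, of m] AI_A[OF N, of n] assms unfolding N_def
    by (auto split: if_splits simp: max_def)
qed

end
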